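(* Consider the following game over slots $1,\dots,T$ with $N\ge2$ users and an integer $1\le k\le N$. The BS chooses a probability distribution on $k$-element subsets of the users. In every slot it independently schedules a $k$-subset drawn from this distribution. The adversary chooses a blocking matrix $\sigma\in\{0,1\}^{N\times T}$, where $\sigma_i(t)=0$ means user $i$ is blocked in slot $t$. Feasibility means $\sum_{i,t}(1-\sigma_i(t))\le\alpha T$ and $\sum_i(1-\sigma_i(t))\le k_a$ for each $t$, where $k_a\ge1$ and $0<\alpha<1$. Ages satisfy $a_i(1)=1$, $a_i(t+1)=1$ if user $i$ is scheduled and not blocked in slot $t$, and $a_i(t+1)=a_i(t)+1$ otherwise. The payoff $\Delta$ is the average age $\frac1T\sum_{t=1}^T\frac1N\sum_i\mathbb E[a_i(t)]$. Consider: - a BS distribution under which every user is scheduled in a given slot with probability $\frac kN$; and - the adversarial action that blocks one arbitrary user exactly in the slots $\frac{(1-\alpha)T}2+1,\dots,\frac{(1+\alpha)T}2$ and nothing else. Then, for all sufficiently large $T$ with $\alpha T\in\mathbb Z$ and $(1-\alpha)T$ even, this pair is a Stackelberg equilibrium with the BS as leader. That is: - the adversarial action maximizes $\Delta$ against the given BS distribution; and - the given BS distribution minimizes $\max_{\sigma\text{ feasible}}\Delta$ over all distributions on $k$-subsets. *)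

theory Defs
  imports Complex_Main "HOL-Library.FuncSet"
begin

text \<open>Users are 0,...,N-1; slots are 1,...,T.
  A schedule is a function from slots to scheduled k-subsets.
  A blocking matrix sigma :: nat => nat => nat, sigma i t = 0 means user i blocked in slot t.\<close>

definition ksets :: "nat \<Rightarrow> nat \<Rightarrow> nat set set" where
  "ksets N k = {S. S \<subseteq> {..<N} \<and> card S = k}"

definition bs_dist :: "nat \<Rightarrow> nat \<Rightarrow> (nat set \<Rightarrow> real) \<Rightarrow> bool" where
  "bs_dist N k p \<longleftrightarrow> (\<forall>S\<in>ksets N k. 0 \<le> p S) \<and> (\<Sum>S\<in>ksets N k. p S) = 1"

fun age :: "(nat \<Rightarrow> nat \<Rightarrow> nat) \<Rightarrow> (nat \<Rightarrow> nat set) \<Rightarrow> nat \<Rightarrow> nat \<Rightarrow> nat" where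
  "age \<sigma> f i 0 = 1"
| "age \<sigma> f i (Suc 0) = 1"
| "age \<sigma> f i (Suc (Suc t)) =
     (if i \<in> f (Suc t) \<and> \<sigma> i (Suc t) \<noteq> 0 then 1 else age \<sigma> f i (Suc t) + 1)"

text \<open>Expected age E[a_i(t)] when the schedule in each slot 1..T is drawn independently from p.\<close>
definition exp_age :: "nat \<Rightarrow> nat \<Rightarrow> nat \<Rightarrow> (nat set \<Rightarrow> real) \<Rightarrow> (nat \<Rightarrow> nat \<Rightarrow> nat) \<Rightarrow> nat \<Rightarrow> nat \<Rightarrow> real" where
  "exp_age N k T p \<sigma> i t =
     (\<Sum>f\<in>PiE {1..T} (\<lambda>_. ksets N k). (\<Prod>s\<in>{1..T}. p (f s)) * real (age \<sigma> f i t))"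

definition avg_age :: "nat \<Rightarrow> nat \<Rightarrow> nat \<Rightarrow> (nat set \<Rightarrow> real) \<Rightarrow> (nat \<Rightarrow> nat \<Rightarrow> nat) \<Rightarrow> real" where
  "avg_age N k T p \<sigma> =
     (1 / real T) * (\<Sum>t=1..T. (1 / real N) * (\<Sum>i<N. exp_age N k T p \<sigma> i t))"

definition feasible :: "nat \<Rightarrow> nat \<Rightarrow> nat \<Rightarrow> real \<Rightarrow> (nat \<Rightarrow> nat \<Rightarrow> nat) \<Rightarrow> bool" where
  "feasible N T ka \<alpha> \<sigma> \<longleftrightarrow>
     (\<forall>i<N. \<forall>t\<in>{1..T}. \<sigma> i t \<in> {0, 1}) \<and>
     real (\<Sum>i<N. \<Sum>t=1..T. 1 - \<sigma> i t) \<le> \<alpha> * real T \<and>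
     (\<forall>t\<in>{1..T}. (\<Sum>i<N. 1 - \<sigma> i t) \<le> ka)"

end

theory Submission
  imports Defs
begin
lemma age_sum:
  "real (age \<sigma> f i (Suc n)) =
    (\<Sum>y\<in>{1..Suc n}. \<Prod>s\<in>{y..<Suc n}. (if i \<in> f s \<and> \<sigma> i s \<noteq> 0 then 0 else 1::real))"
proof (induction n)
  case 0
  then show ?case by simp
next
  case (Suc n)
  let ?g = "\<lambda>s. (if i \<in> f s \<and> \<sigma> i s \<noteq> 0 then 0 else 1::real)"
  have split: "{1..Suc (Suc n)} = insert (Suc (Suc n)) {1..Suc n}" by auto
  have "(\<Sum>y\<in>{1..Suc (Suc n)}. \<Prod>s\<in>{y..<Suc (Suc n)}. ?g s)
      = 1 + (\<Sum>y\<in>{1..Suc n}. \<Prod>s\<in>{y..<Suc (Suc n)}. ?g s)"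
    unfolding split by (subst sum.insert) auto
  also have "(\<Sum>y\<in>{1..Suc n}. \<Prod>s\<in>{y..<Suc (Suc n)}. ?g s)
      = (\<Sum>y\<in>{1..Suc n}. ?g (Suc n) * (\<Prod>s\<in>{y..<Suc n}. ?g s))"
  proof (rule sum.cong)
    fix y assume "y \<in> {1..Suc n}"
    then have "{y..<Suc (Suc n)} = insert (Suc n) {y..<Suc n}" by auto
    then show "(\<Prod>s\<in>{y..<Suc (Suc n)}. ?g s) = ?g (Suc n) * (\<Prod>s\<in>{y..<Suc n}. ?g s)"
      by simp
  qed simp
  also have "\<dots> = ?g (Suc n) * real (age \<sigma> f i (Suc n))"
    using Suc by (simp add: sum_distrib_left)
  finally show ?case by auto
qed

lemma sum_PiE_prod:
  fixes p :: "'b \<Rightarrow> real"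
  assumes "finite I" "finite A" "J \<subseteq> I"
  shows "(\<Sum>f\<in>PiE I (\<lambda>_. A). (\<Prod>s\<in>I. p (f s)) * (\<Prod>s\<in>J. g s (f s)))
       = (\<Prod>s\<in>I. \<Sum>S\<in>A. p S * (if s \<in> J then g s S else 1))"
proof -
  have "(\<Prod>s\<in>I. \<Sum>S\<in>A. p S * (if s \<in> J then g s S else 1))
     = (\<Sum>f\<in>PiE I (\<lambda>_. A). \<Prod>s\<in>I. p (f s) * (if s \<in> J then g s (f s) else 1))"
    using assms by (intro prod_sum_PiE) auto
  also have "\<dots> = (\<Sum>f\<in>PiE I (\<lambda>_. A). (\<Prod>s\<in>I. p (f s)) * (\<Prod>s\<in>J. g s (f s)))"
  proof (rule sum.cong)
    fix f
    have "(\<Prod>s\<in>I. (if s \<in> J then g s (f s) else 1)) = (\<Prod>s\<in>J. g s (f s))"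
      using assms by (simp add: prod.If_cases Int_absorb1)
    then show "(\<Prod>s\<in>I. p (f s) * (if s \<in> J then g s (f s) else 1)) = (\<Prod>s\<in>I. p (f s)) * (\<Prod>s\<in>J. g s (f s))"
      by (simp add: prod.distrib)
  qed simp
  finally show ?thesis by simp
qed

lemma prod_if_subset:
  "finite I \<Longrightarrow> J \<subseteq> I \<Longrightarrow> (\<Prod>s\<in>I. if s \<in> J then h s else 1) = (\<Prod>s\<in>J. h s)"
  by (simp add: prod.If_cases Int_absorb1)

lemma prod_if_pow:
  "finite A \<Longrightarrow> (\<Prod>s\<in>A. if P s then c else 1) = c ^ card {s\<in>A. P s}"
  by (simp add: prod.If_cases Int_def)

definition qm :: "nat \<Rightarrow> nat \<Rightarrow> (nat set \<Rightarrow> real) \<Rightarrow> nat \<Rightarrow> real" where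
  "qm N k p i = (\<Sum>S\<in>{S\<in>ksets N k. i \<in> S}. p S)"

lemma finite_ksets: "finite (ksets N k)"
  unfolding ksets_def by (rule finite_subset[of _ "Pow {..<N}"]) auto

lemma slot_sum:
  assumes "bs_dist N k p"
  shows "(\<Sum>S\<in>ksets N k. p S * (if i \<in> S \<and> \<sigma> i s \<noteq> 0 then 0 else 1))
        = (if \<sigma> i s \<noteq> 0 then 1 - qm N k p i else 1)"
proof -
  have "(\<Sum>S\<in>ksets N k. p S * (if i \<in> S \<and> \<sigma> i s \<noteq> 0 then 0 else 1))
     = (\<Sum>S\<in>ksets N k. p S) - (\<Sum>S\<in>ksets N k. (if i \<in> S \<and> \<sigma> i s \<noteq> 0 then p S else 0))"
    by (simp add: sum_subtractf[symmetric] if_distrib cong: if_cong)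
  also have "(\<Sum>S\<in>ksets N k. (if i \<in> S \<and> \<sigma> i s \<noteq> 0 then p S else 0))
       = (if \<sigma> i s \<noteq> 0 then qm N k p i else 0)"
    unfolding qm_def using finite_ksets by (auto simp: sum.inter_filter[symmetric])
  finally show ?thesis using assms unfolding bs_dist_def by auto
qed

lemma exp_age_formula:
  assumes "bs_dist N k p" "1 \<le> t" "t \<le> T"
  shows "exp_age N k T p \<sigma> i t
       = (\<Sum>y\<in>{1..t}. (1 - qm N k p i) ^ card ({y..<t} - {s. \<sigma> i s = 0}))"
proof -
  let ?g = "\<lambda>s S. (if i \<in> S \<and> \<sigma> i s \<noteq> 0 then 0 else 1::real)"
  obtain n where tn: "t = Suc n" using assms(2) by (cases t) auto
  have "exp_age N k T p \<sigma> i t = (\<Sum>f\<in>PiE {1..T} (\<lambda>_. ksets N k). (\<Prod>s\<in>{1..T}. p (f s)) *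
        (\<Sum>y\<in>{1..t}. \<Prod>s\<in>{y..<t}. ?g s (f s)))"
    unfolding exp_age_def tn by (simp only: age_sum)
  also have "\<dots> = (\<Sum>y\<in>{1..t}. \<Sum>f\<in>PiE {1..T} (\<lambda>_. ksets N k). (\<Prod>s\<in>{1..T}. p (f s)) *
        (\<Prod>s\<in>{y..<t}. ?g s (f s)))"
    by (simp add: sum_distrib_left) (rule sum.swap)
  also have "\<dots> = (\<Sum>y\<in>{1..t}. (1 - qm N k p i) ^ card ({y..<t} - {s. \<sigma> i s = 0}))"
  proof (rule sum.cong)
    fix y assume y: "y \<in> {1..t}"
    have J: "{y..<t} \<subseteq> {1..T}" using y assms by auto
    have "(\<Sum>f\<in>PiE {1..T} (\<lambda>_. ksets N k). (\<Prod>s\<in>{1..T}. p (f s)) * (\<Prod>s\<in>{y..<t}. ?g s (f s)))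
        = (\<Prod>s\<in>{1..T}. \<Sum>S\<in>ksets N k. p S * (if s \<in> {y..<t} then ?g s S else 1))"
      by (rule sum_PiE_prod[OF _ finite_ksets J]) simp
    also have "\<dots> = (\<Prod>s\<in>{1..T}. if s \<in> {y..<t} then (if \<sigma> i s \<noteq> 0 then 1 - qm N k p i else 1) else 1)"
    proof (rule prod.cong[OF refl])
      fix s assume "s \<in> {1..T}"
      show "(\<Sum>S\<in>ksets N k. p S * (if s \<in> {y..<t} then ?g s S else 1))
          = (if s \<in> {y..<t} then (if \<sigma> i s \<noteq> 0 then 1 - qm N k p i else 1) else 1)"
      proof (cases "s \<in> {y..<t}")
        case True
        then show ?thesis using slot_sum[OF assms(1), of i \<sigma> s] by simp
      next
        case False
        then show ?thesis using assms(1) unfolding bs_dist_def by (simp del: atLeastLessThan_iff)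
      qed
    qed
    also have "\<dots> = (\<Prod>s\<in>{y..<t}. (if \<sigma> i s \<noteq> 0 then 1 - qm N k p i else 1))"
      using J by (intro prod_if_subset) auto
    also have "\<dots> = (1 - qm N k p i) ^ card {s\<in>{y..<t}. \<sigma> i s \<noteq> 0}"
      by (rule prod_if_pow) simp
    also have "{s\<in>{y..<t}. \<sigma> i s \<noteq> 0} = {y..<t} - {s. \<sigma> i s = 0}"
      by auto
    finally show "(\<Sum>f\<in>PiE {1..T} (\<lambda>_. ksets N k). (\<Prod>s\<in>{1..T}. p (f s)) * (\<Prod>s\<in>{y..<t}. ?g s (f s)))
        = (1 - qm N k p i) ^ card ({y..<t} - {s. \<sigma> i s = 0})" .
  qed simp
  finally show ?thesis .
qed

definition Vf :: "real \<Rightarrow> nat \<Rightarrow> nat set \<Rightarrow> real" where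
  "Vf r T Z = (\<Sum>t\<in>{1..T}. \<Sum>y\<in>{1..t}. r ^ card ({y..<t} - Z))"

definition Lf :: "real \<Rightarrow> nat set \<Rightarrow> nat \<Rightarrow> real" where
  "Lf r B x = (\<Sum>y\<in>{1..x}. r ^ card ({y..<x} - B))"

lemma shift_geo: "(\<Sum>t\<in>{Suc x..T}. r ^ (t - Suc x)) = (\<Sum>i<T - x. (r::real) ^ i)"
proof (induction T)
  case 0 then show ?case by simp
next
  case (Suc T)
  show ?case
  proof (cases "x \<le> T")
    case True
    have "{Suc x..Suc T} = insert (Suc T) {Suc x..T}" using True by auto
    then have "(\<Sum>t\<in>{Suc x..Suc T}. r ^ (t - Suc x)) = r ^ (T - x) + (\<Sum>t\<in>{Suc x..T}. r ^ (t - Suc x))"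
      by simp
    also have "\<dots> = (\<Sum>i<Suc T - x. r ^ i)" using Suc True by (simp add: Suc_diff_le)
    finally show ?thesis .
  next
    case False
    then show ?thesis by simp
  qed
qed

lemma Vf_insert:
  assumes xB: "x \<notin> B" and lt: "\<forall>b\<in>B. b < x" and x1: "1 \<le> x" and xT: "x < T"
  shows "Vf r T (insert x B) = Vf r T B + (1 - r ^ (T - x)) * Lf r B x"
proof -
  define D where "D t y = (if y \<le> x \<and> x < t then (1 - r) * r ^ card ({y..<x} - B) * r ^ (t - Suc x) else 0)" for t y
  have pt: "r ^ card ({y..<t} - insert x B) = r ^ card ({y..<t} - B) + D t y" for t y
  proof (cases "y \<le> x \<and> x < t")
    case True
    have fin: "finite ({y..<x} - B)" by simp
    have e1: "{y..<t} - B = ({y..<x} - B) \<union> {x..<t}" using True lt by auto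
    have e2: "{y..<t} - insert x B = ({y..<x} - B) \<union> {Suc x..<t}" using True lt by auto
    have c1: "card ({y..<t} - B) = card ({y..<x} - B) + (t - x)"
      unfolding e1 by (subst card_Un_disjoint) auto
    have c2: "card ({y..<t} - insert x B) = card ({y..<x} - B) + (t - Suc x)"
      unfolding e2 by (subst card_Un_disjoint) auto
    have tx: "t - x = Suc (t - Suc x)" using True by auto
    have alg: "r ^ (a + s) = r ^ (a + Suc s) + (1 - r) * r ^ a * r ^ s" for a s
      by (simp add: power_add algebra_simps)
    have h1: "r ^ card ({y..<t} - insert x B) = r ^ (card ({y..<x} - B) + (t - Suc x))"
      by (simp only: c2)
    have h2: "r ^ card ({y..<t} - B) = r ^ (card ({y..<x} - B) + Suc (t - Suc x))"
      by (simp only: c1 tx)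
    have h3: "D t y = (1 - r) * r ^ card ({y..<x} - B) * r ^ (t - Suc x)"
      using True unfolding D_def by simp
    show ?thesis unfolding h1 h2 h3 by (rule alg)
  next
    case False
    then have "{y..<t} - insert x B = {y..<t} - B" by auto
    moreover have "D t y = 0" using False unfolding D_def by auto
    ultimately show ?thesis by simp
  qed
  have "Vf r T (insert x B) = Vf r T B + (\<Sum>t\<in>{1..T}. \<Sum>y\<in>{1..t}. D t y)"
    unfolding Vf_def by (simp add: pt sum.distrib)
  also have "(\<Sum>t\<in>{1..T}. \<Sum>y\<in>{1..t}. D t y)
      = (\<Sum>t\<in>{1..T}. if x < t then (1 - r) * r ^ (t - Suc x) * Lf r B x else 0)"
  proof (rule sum.cong[OF refl])
    fix t assume t: "t \<in> {1..T}"
    show "(\<Sum>y\<in>{1..t}. D t y) = (if x < t then (1 - r) * r ^ (t - Suc x) * Lf r B x else 0)"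
    proof (cases "x < t")
      case True
      have "(\<Sum>y\<in>{1..t}. D t y) = (\<Sum>y\<in>{1..x}. D t y)"
        using True by (intro sum.mono_neutral_right) (auto simp: D_def)
      also have "\<dots> = (\<Sum>y\<in>{1..x}. (1 - r) * r ^ (t - Suc x) * r ^ card ({y..<x} - B))"
        using True by (intro sum.cong) (auto simp: D_def)
      also have "\<dots> = (1 - r) * r ^ (t - Suc x) * Lf r B x"
        unfolding Lf_def by (simp add: sum_distrib_left)
      finally show ?thesis using True by simp
    next
      case False
      then show ?thesis by (simp add: D_def)
    qed
  qed
  also have "\<dots> = (\<Sum>t\<in>{Suc x..T}. (1 - r) * r ^ (t - Suc x) * Lf r B x)"
    using x1 by (subst sum.If_cases) (auto intro!: sum.cong)
  also have "\<dots> = (1 - r) * (\<Sum>t\<in>{Suc x..T}. r ^ (t - Suc x)) * Lf r B x"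
    by (simp add: sum_distrib_left sum_distrib_right mult.assoc)
  also have "\<dots> = (1 - r ^ (T - x)) * Lf r B x"
    by (simp only: shift_geo one_diff_power_eq)
  finally show ?thesis .
qed

lemma Vf_decomp:
  assumes "finite B" "B \<subseteq> {1..<T}"
  shows "Vf r T B = Vf r T {} + (\<Sum>x\<in>B. (1 - r ^ (T - x)) * Lf r (B \<inter> {..<x}) x)"
  using assms
proof (induction "card B" arbitrary: B)
  case 0
  then show ?case by simp
next
  case (Suc n)
  then have ne: "B \<noteq> {}" by auto
  define x where "x = Max B"
  define B' where "B' = B - {x}"
  have xB: "x \<in> B" using Suc.prems ne unfolding x_def by simp
  have BB: "B = insert x B'" using xB unfolding B'_def by auto
  have cB': "n = card B'" using Suc.hyps(2) Suc.prems xB unfolding B'_def by simp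
  have lt: "\<forall>b\<in>B'. b < x" using Suc.prems unfolding B'_def x_def
    by (metis Diff_iff Max_ge insertI1 order_le_neq_trans)
  have IH: "Vf r T B' = Vf r T {} + (\<Sum>z\<in>B'. (1 - r ^ (T - z)) * Lf r (B' \<inter> {..<z}) z)"
    using Suc.hyps(1)[OF cB'] Suc.prems unfolding B'_def by auto
  have x1: "1 \<le> x" "x < T" using xB Suc.prems by auto
  have step: "Vf r T B = Vf r T B' + (1 - r ^ (T - x)) * Lf r B' x"
    unfolding BB by (rule Vf_insert) (use lt x1 B'_def in auto)
  have B'eq: "B \<inter> {..<x} = B'"
  proof
    show "B \<inter> {..<x} \<subseteq> B'" unfolding B'_def by auto
    show "B' \<subseteq> B \<inter> {..<x}" using lt B'_def by blast
  qed
  have cong: "(\<Sum>z\<in>B'. (1 - r ^ (T - z)) * Lf r (B' \<inter> {..<z}) z)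
      = (\<Sum>z\<in>B'. (1 - r ^ (T - z)) * Lf r (B \<inter> {..<z}) z)"
  proof (rule sum.cong[OF refl])
    fix z assume "z \<in> B'"
    then have "z < x" using lt by blast
    then have "B' \<inter> {..<z} = B \<inter> {..<z}" unfolding B'_def by auto
    then show "(1 - r ^ (T - z)) * Lf r (B' \<inter> {..<z}) z = (1 - r ^ (T - z)) * Lf r (B \<inter> {..<z}) z"
      by simp
  qed
  have fB': "finite B'" using Suc.prems unfolding B'_def by auto
  have xnB': "x \<notin> B'" unfolding B'_def by auto
  have "(\<Sum>z\<in>B. (1 - r ^ (T - z)) * Lf r (B \<inter> {..<z}) z)
      = (1 - r ^ (T - x)) * Lf r B' x + (\<Sum>z\<in>B'. (1 - r ^ (T - z)) * Lf r (B \<inter> {..<z}) z)"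
    using fB' xnB' B'eq by (subst BB) (simp add: sum.insert)
  then show ?case using step IH cong by simp
qed

lemma Lf_split:
  assumes B: "B \<subseteq> {1..<x}" and x1: "1 \<le> x"
  shows "Lf r B x = (\<Sum>c<x - card B. r ^ c) + (\<Sum>y\<in>B. r ^ card ({y..<x} - B))"
proof -
  have fin: "finite B" using B finite_subset by blast
  define S where "S = {1..x} - B"
  define cf where "cf y = card ({y..<x} - B)" for y
  have "Lf r B x = (\<Sum>y\<in>S. r ^ cf y) + (\<Sum>y\<in>B. r ^ cf y)"
    unfolding Lf_def S_def cf_def using B by (intro sum.subset_diff) auto
  moreover have "(\<Sum>y\<in>S. r ^ cf y) = (\<Sum>c<x - card B. r ^ c)"
  proof -
    have mono: "cf y' < cf y" if "y \<in> S" "y' \<in> S" "y < y'" for y y'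
    proof -
      have s1: "{y'..<x} - B \<subseteq> {y..<x} - B" using that by auto
      have s2: "y \<in> {y..<x} - B" using that unfolding S_def by auto
      have s3: "y \<notin> {y'..<x} - B" using that by auto
      have "{y'..<x} - B \<subset> {y..<x} - B" using s1 s2 s3 by blast
      then show ?thesis unfolding cf_def by (intro psubset_card_mono) auto
    qed
    have inj: "inj_on cf S"
    proof (rule inj_onI, rule ccontr)
      fix y y' assume "y \<in> S" "y' \<in> S" "cf y = cf y'" "y \<noteq> y'"
      then consider "y < y'" | "y' < y" by (meson linorder_neqE_nat)
      then show False using mono[of y y'] mono[of y' y] \<open>cf y = cf y'\<close> \<open>y \<in> S\<close> \<open>y' \<in> S\<close>
        by cases auto
    qed
    have cB: "card B \<le> x - 1" using card_mono[OF _ B] by simp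
    have sub: "cf ` S \<subseteq> {..<x - card B}"
    proof
      fix c assume "c \<in> cf ` S"
      then obtain y where y: "y \<in> S" "c = cf y" by auto
      have "cf y \<le> card ({1..<x} - B)" unfolding cf_def
        using y(1) unfolding S_def by (intro card_mono) auto
      also have "\<dots> = x - 1 - card B" using B fin by (simp add: card_Diff_subset)
      finally show "c \<in> {..<x - card B}" using y cB x1 by auto
    qed
    have cS: "card S = x - card B" unfolding S_def using B fin
      by (subst card_Diff_subset) auto
    have img: "cf ` S = {..<x - card B}"
      using sub by (intro card_subset_eq) (auto simp: card_image[OF inj] cS)
    have "(\<Sum>c<x - card B. r ^ c) = (\<Sum>c\<in>cf ` S. r ^ c)" by (simp add: img)
    also have "\<dots> = (\<Sum>y\<in>S. r ^ cf y)" by (simp add: sum.reindex[OF inj])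
    finally show ?thesis by simp
  qed
  ultimately show ?thesis unfolding cf_def by simp
qed

lemma rank_mono:
  fixes B :: "nat set"
  assumes "finite B" "x \<in> B" "x' \<in> B" "x < x'"
  shows "card (B \<inter> {..<x}) < card (B \<inter> {..<x'})"
  using assms by (intro psubset_card_mono) auto

lemma rank_bij:
  fixes B :: "nat set"
  assumes "finite B"
  shows "bij_betw (\<lambda>x. card (B \<inter> {..<x})) B {..<card B}"
proof -
  let ?f = "\<lambda>x. card (B \<inter> {..<x})"
  have inj: "inj_on ?f B"
  proof (rule inj_onI, rule ccontr)
    fix y y' assume "y \<in> B" "y' \<in> B" "?f y = ?f y'" "y \<noteq> y'"
    then consider "y < y'" | "y' < y" by (meson linorder_neqE_nat)
    then show False using rank_mono[OF assms, of y y'] rank_mono[OF assms, of y' y] \<open>?f y = ?f y'\<close>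
      \<open>y \<in> B\<close> \<open>y' \<in> B\<close> by cases auto
  qed
  have sub: "?f ` B \<subseteq> {..<card B}"
  proof
    fix c assume "c \<in> ?f ` B"
    then obtain y where y: "y \<in> B" "c = ?f y" by auto
    have "B \<inter> {..<y} \<subset> B" using y by auto
    then have "?f y < card B" using assms by (intro psubset_card_mono) auto
    then show "c \<in> {..<card B}" using y by simp
  qed
  have "?f ` B = {..<card B}"
    using sub by (intro card_subset_eq) (auto simp: card_image[OF inj])
  then show ?thesis using inj unfolding bij_betw_def by simp
qed

lemma sum_rank:
  fixes B :: "nat set"
  assumes "finite B"
  shows "(\<Sum>x\<in>B. g (card (B \<inter> {..<x}))) = (\<Sum>j<card B. g j)"
  using sum.reindex_bij_betw[OF rank_bij[OF assms], of g] by simp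

lemma tangent:
  fixes r :: real
  assumes "0 \<le> r" "r \<le> 1" "d \<le> 2*m+1"
  shows "r ^ m + r ^ Suc m \<le> r ^ d + r ^ (2*m+1-d)"
proof (cases "d \<le> m")
  case True
  define a where "a = m - d"
  have m: "m = d + a" and e: "2*m+1-d = Suc m + a" using True unfolding a_def by auto
  have p1: "r ^ Suc m \<le> r ^ d" using assms True by (intro power_decreasing) auto
  have p2: "0 \<le> 1 - r ^ a" using assms by (simp add: power_le_one)
  have "r ^ d + r ^ (2*m+1-d) - (r ^ m + r ^ Suc m) = (r ^ d - r ^ Suc m) * (1 - r ^ a)"
    unfolding e m by (simp add: power_add power_mult power2_eq_square algebra_simps)
  also have "\<dots> \<ge> 0" using p1 p2 by simp
  finally show ?thesis by simp
next
  case False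
  define a where "a = d - Suc m"
  have d: "d = Suc m + a" and e: "m = (2*m+1-d) + a" using False assms(3) unfolding a_def by auto
  have p1: "r ^ Suc m \<le> r ^ (2*m+1-d)" using assms False by (intro power_decreasing) auto
  have p2: "0 \<le> 1 - r ^ a" using assms by (simp add: power_le_one)
  have "r ^ d + r ^ (2*m+1-d) - (r ^ m + r ^ Suc m) = (r ^ (2*m+1-d) - r ^ Suc m) * (1 - r ^ a)"
    by (subst (2) e, subst d) (simp add: power_add power_mult power2_eq_square algebra_simps)
  also have "\<dots> \<ge> 0" using p1 p2 by simp
  finally show ?thesis by simp
qed

lemma beta_sum:
  fixes K r :: real
  assumes "K * (1 - r) = 1"
  shows "(\<Sum>j<L. (K + real j) * r ^ (L - 1 - j)) = K * real L"
proof (induction L)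
  case 0 then show ?case by simp
next
  case (Suc L)
  have "(\<Sum>j<Suc L. (K + real j) * r ^ (Suc L - 1 - j))
      = (\<Sum>j<L. (K + real j) * r ^ (L - j)) + (K + real L)" by simp
  also have "(\<Sum>j<L. (K + real j) * r ^ (L - j)) = r * (\<Sum>j<L. (K + real j) * r ^ (L - 1 - j))"
    unfolding sum_distrib_left
  proof (rule sum.cong[OF refl])
    fix j assume "j \<in> {..<L}"
    then have "L - j = Suc (L - 1 - j)" by auto
    then show "(K + real j) * r ^ (L - j) = r * ((K + real j) * r ^ (L - 1 - j))" by simp
  qed
  also have "\<dots> = r * K * real L" using Suc by simp
  finally have eq: "(\<Sum>j<Suc L. (K + real j) * r ^ (Suc L - 1 - j)) = r * K * real L + (K + real L)" .
  have "K * real L * (1 - r) = (K * (1 - r)) * real L" by (simp add: mult_ac)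
  also have "\<dots> = real L" using assms by simp
  finally have "K * real L * (1 - r) = real L" .
  then show ?case unfolding eq by (simp add: algebra_simps)
qed

lemma cheb:
  fixes c w :: "'a \<Rightarrow> real"
  assumes "finite A" "\<And>x y. x \<in> A \<Longrightarrow> y \<in> A \<Longrightarrow> 0 \<le> (c x - c y) * (w x - w y)"
    and "sum c A = 0"
  shows "0 \<le> (\<Sum>x\<in>A. c x * w x)"
proof -
  have "0 \<le> (\<Sum>x\<in>A. \<Sum>y\<in>A. (c x - c y) * (w x - w y))"
    using assms by (intro sum_nonneg) auto
  also have "(\<Sum>x\<in>A. \<Sum>y\<in>A. (c x - c y) * (w x - w y))
     = (\<Sum>x\<in>A. real (card A) * (c x * w x) + (\<Sum>y\<in>A. c y * w y) - c x * sum w A - sum c A * w x)"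
  proof (rule sum.cong[OF refl])
    fix x assume "x \<in> A"
    have "(\<Sum>y\<in>A. (c x - c y) * (w x - w y)) = (\<Sum>y\<in>A. c x * w x + c y * w y - c x * w y - c y * w x)"
      by (rule sum.cong[OF refl]) (simp add: algebra_simps)
    also have "\<dots> = (\<Sum>y\<in>A. c x * w x) + (\<Sum>y\<in>A. c y * w y) - (\<Sum>y\<in>A. c x * w y) - (\<Sum>y\<in>A. c y * w x)"
      by (simp only: sum.distrib sum_subtractf)
    also have "\<dots> = real (card A) * (c x * w x) + (\<Sum>y\<in>A. c y * w y) - c x * sum w A - sum c A * w x"
      by (simp only: sum_constant sum_distrib_left sum_distrib_right)
    finally show "(\<Sum>y\<in>A. (c x - c y) * (w x - w y)) = real (card A) * (c x * w x) + (\<Sum>y\<in>A. c y * w y) - c x * sum w A - sum c A * w x" .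
  qed
  also have "\<dots> = (\<Sum>x\<in>A. real (card A) * (c x * w x) + (\<Sum>y\<in>A. c y * w y) - c x * sum w A)"
    using assms(3) by simp
  also have "\<dots> = real (card A) * (\<Sum>x\<in>A. c x * w x) + real (card A) * (\<Sum>y\<in>A. c y * w y) - sum c A * sum w A"
    by (simp only: sum.distrib sum_subtractf sum_constant sum_distrib_left[symmetric] sum_distrib_right[symmetric])
  also have "\<dots> = 2 * (real (card A) * (\<Sum>x\<in>A. c x * w x))"
    using assms(3) by simp
  finally have "0 \<le> real (card A) * (\<Sum>x\<in>A. c x * w x)" using assms(3) by simp
  then show ?thesis
    by (cases "card A = 0") (use assms(1) in \<open>auto simp: zero_le_mult_iff\<close>)
qed

lemma geo_eq:
  fixes r K :: real
  assumes "r \<noteq> 1" "K = 1 / (1 - r)"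
  shows "(\<Sum>c<n. r ^ c) = K * (1 - r ^ n)"
proof -
  have ne: "1 - r \<noteq> 0" using assms by simp
  have "(1 - r) * (\<Sum>c<n. r ^ c) = 1 - r ^ n" by (simp add: one_diff_power_eq)
  then have "(\<Sum>c<n. r ^ c) = (1 - r ^ n) / (1 - r)" using ne by (simp add: eq_divide_eq mult.commute)
  then show ?thesis using assms by simp
qed

lemma G_upper:
  fixes r :: real
  assumes "finite B" "B \<subseteq> {1..<T}" "0 \<le> r" "r \<le> 1"
  shows "Vf r T B - Vf r T {} \<le> (\<Sum>x\<in>B. (1 - r ^ (T - x)) *
           ((\<Sum>c<x - card (B \<inter> {..<x}). r ^ c) + real (card (B \<inter> {..<x}))))"
proof -
  have "Vf r T B - Vf r T {} = (\<Sum>x\<in>B. (1 - r ^ (T - x)) * Lf r (B \<inter> {..<x}) x)"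
    using Vf_decomp[OF assms(1,2)] by simp
  also have "\<dots> \<le> (\<Sum>x\<in>B. (1 - r ^ (T - x)) *
           ((\<Sum>c<x - card (B \<inter> {..<x}). r ^ c) + real (card (B \<inter> {..<x}))))"
  proof (rule sum_mono)
    fix x assume x: "x \<in> B"
    have sub: "B \<inter> {..<x} \<subseteq> {1..<x}" using assms(2) by auto
    have "Lf r (B \<inter> {..<x}) x = (\<Sum>c<x - card (B \<inter> {..<x}). r ^ c)
        + (\<Sum>y\<in>B \<inter> {..<x}. r ^ card ({y..<x} - B \<inter> {..<x}))"
      using x assms(2) by (intro Lf_split[OF sub]) auto
    also have "(\<Sum>y\<in>B \<inter> {..<x}. r ^ card ({y..<x} - B \<inter> {..<x})) \<le> (\<Sum>y\<in>B \<inter> {..<x}. 1)"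
      using assms by (intro sum_mono power_le_one) auto
    finally have "Lf r (B \<inter> {..<x}) x \<le> (\<Sum>c<x - card (B \<inter> {..<x}). r ^ c) + real (card (B \<inter> {..<x}))"
      by simp
    moreover have "0 \<le> 1 - r ^ (T - x)" using assms by (simp add: power_le_one)
    ultimately show "(1 - r ^ (T - x)) * Lf r (B \<inter> {..<x}) x \<le> (1 - r ^ (T - x)) *
           ((\<Sum>c<x - card (B \<inter> {..<x}). r ^ c) + real (card (B \<inter> {..<x})))"
      by (rule mult_left_mono)
  qed
  finally show ?thesis .
qed

lemma sum_nat_real: "(\<Sum>j<l. real j) = real l * (real l - 1) / 2"
  by (induction l) (simp_all add: field_simps)

lemma star_exact:
  fixes r K :: real
  assumes r: "0 \<le> r" "r < 1" and K: "K = 1 / (1 - r)" and T: "T = 2*m + L" and m1: "1 \<le> m"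
  shows "Vf r T {Suc m..m+L} - Vf r T {} =
     (\<Sum>j<L. (1 - r ^ (m+L-1-j)) * (K * (1 - r ^ Suc m) + real j))"
proof -
  let ?B = "{Suc m..m+L}"
  have sub: "?B \<subseteq> {1..<T}" using T m1 by auto
  have "Vf r T ?B - Vf r T {} = (\<Sum>x\<in>?B. (1 - r ^ (T - x)) * Lf r (?B \<inter> {..<x}) x)"
    using Vf_decomp[OF _ sub] by simp
  also have "\<dots> = (\<Sum>x\<in>?B. (\<lambda>j. (1 - r ^ (m+L-1-j)) * (K * (1 - r ^ Suc m) + real j)) (card (?B \<inter> {..<x})))"
  proof (rule sum.cong[OF refl])
    fix x assume x: "x \<in> ?B"
    have e: "?B \<inter> {..<x} = {Suc m..<x}" using x by auto
    have c: "card (?B \<inter> {..<x}) = x - Suc m" unfolding e by simp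
    have "Lf r {Suc m..<x} x = (\<Sum>c<x - card {Suc m..<x}. r ^ c) + (\<Sum>y\<in>{Suc m..<x}. r ^ card ({y..<x} - {Suc m..<x}))"
      using x by (intro Lf_split) auto
    also have "(\<Sum>y\<in>{Suc m..<x}. r ^ card ({y..<x} - {Suc m..<x})) = (\<Sum>y\<in>{Suc m..<x}. 1)"
    proof (rule sum.cong[OF refl])
      fix y assume "y \<in> {Suc m..<x}"
      then have e0: "{y..<x} - {Suc m..<x} = {}" by auto
      show "r ^ card ({y..<x} - {Suc m..<x}) = 1" unfolding e0 by simp
    qed
    also have "x - card {Suc m..<x} = Suc m" using x by auto
    also have "(\<Sum>c<Suc m. r ^ c) = K * (1 - r ^ Suc m)" using r K by (intro geo_eq) auto
    finally have lf: "Lf r {Suc m..<x} x = K * (1 - r ^ Suc m) + real (x - Suc m)" by simp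
    have tx: "T - x = m + L - 1 - (x - Suc m)" using x T by auto
    show "(1 - r ^ (T - x)) * Lf r (?B \<inter> {..<x}) x =
       (\<lambda>j. (1 - r ^ (m+L-1-j)) * (K * (1 - r ^ Suc m) + real j)) (card (?B \<inter> {..<x}))"
      unfolding c e lf tx by simp
  qed
  also have "\<dots> = (\<Sum>j<card ?B. (1 - r ^ (m+L-1-j)) * (K * (1 - r ^ Suc m) + real j))"
    by (rule sum_rank) simp
  finally show ?thesis by simp
qed

lemma K_facts:
  fixes r K :: real
  assumes r: "0 \<le> r" "r < 1" and K: "K = 1 / (1 - r)"
  shows "K \<ge> 1" "K * (1 - r) = 1"
proof -
  have p: "0 < 1 - r" "1 - r \<le> 1" using r by auto
  show "K \<ge> 1" unfolding K using p by (simp add: le_divide_eq)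
  show "K * (1 - r) = 1" unfolding K using p by simp
qed

lemma crude:
  fixes r K :: real
  assumes r: "0 \<le> r" "r < 1" and K: "K = 1 / (1 - r)"
    and B: "finite B" "B \<subseteq> {1..<T}"
  shows "Vf r T B - Vf r T {} \<le> K * real (card B) + real (card B) * (real (card B) - 1) / 2"
proof -
  have K1: "K \<ge> 1" using K_facts[OF r K] by simp
  have "Vf r T B - Vf r T {} \<le> (\<Sum>x\<in>B. (1 - r ^ (T - x)) *
           ((\<Sum>c<x - card (B \<inter> {..<x}). r ^ c) + real (card (B \<inter> {..<x}))))"
    using G_upper[OF B] r by simp
  also have "\<dots> \<le> (\<Sum>x\<in>B. K + real (card (B \<inter> {..<x})))"
  proof (rule sum_mono)
    fix x assume "x \<in> B"
    let ?n = "x - card (B \<inter> {..<x})" and ?j = "real (card (B \<inter> {..<x}))"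
    have g: "(\<Sum>c<?n. r ^ c) = K * (1 - r ^ ?n)" using r K by (intro geo_eq) auto
    have g1: "K * (1 - r ^ ?n) \<le> K" using r K1 by (simp add: zero_le_power)
    have g0: "0 \<le> K * (1 - r ^ ?n)" using r K1 by (simp add: power_le_one)
    have a: "0 \<le> r ^ (T - x)" "r ^ (T - x) \<le> 1" using r by (auto simp: power_le_one)
    have "(1 - r ^ (T - x)) * (K * (1 - r ^ ?n) + ?j) \<le> 1 * (K * (1 - r ^ ?n) + ?j)"
      using a g0 by (intro mult_right_mono) auto
    also have "\<dots> \<le> K + ?j" using g1 by simp
    finally show "(1 - r ^ (T - x)) * ((\<Sum>c<?n. r ^ c) + ?j) \<le> K + ?j" unfolding g .
  qed
  also have "\<dots> = (\<Sum>j<card B. K + real j)"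
    using sum_rank[OF B(1), of "\<lambda>j. K + real j"] by simp
  also have "\<dots> = K * real (card B) + real (card B) * (real (card B) - 1) / 2"
    by (simp add: sum.distrib sum_nat_real)
  finally show ?thesis .
qed

lemma beta_mono:
  fixes r K :: real
  assumes "0 \<le> r" "r \<le> 1" "0 \<le> K" "i \<le> i'" "i' \<le> L - 1"
  shows "(K + real i) * r ^ (L - 1 - i) \<le> (K + real i') * r ^ (L - 1 - i')"
proof (rule mult_mono)
  show "K + real i \<le> K + real i'" using assms by simp
  show "r ^ (L - 1 - i) \<le> r ^ (L - 1 - i')" using assms by (intro power_decreasing) auto
qed (use assms in auto)

lemma fine:
  fixes r K :: real
  assumes r: "0 \<le> r" "r < 1" and K: "K = 1 / (1 - r)" and T: "T = 2*m + L" and m1: "1 \<le> m"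
    and B: "finite B" "B \<subseteq> {1..<T}" "card B = L"
  shows "Vf r T B - Vf r T {} \<le> Vf r T {Suc m..m+L} - Vf r T {}"
proof -
  define j where "j x = card (B \<inter> {..<x})" for x
  define d where "d x = x - j x" for x
  define \<beta> where "\<beta> i = (K + real i) * r ^ (L - 1 - i)" for i
  have Kf: "K \<ge> 1" "K * (1 - r) = 1" using K_facts[OF r K] by auto
  have jx: "j x \<le> x - 1" if "x \<in> B" for x
  proof -
    have "B \<inter> {..<x} \<subseteq> {1..<x}" using B(2) by auto
    then have "j x \<le> card {1..<x}" unfolding j_def by (intro card_mono) auto
    then show ?thesis by simp
  qed
  have jL: "j x + card (B \<inter> {x<..}) + 1 = L" if "x \<in> B" for x
  proof -
    have eqB: "(B \<inter> {..<x}) \<union> insert x (B \<inter> {x<..}) = B" using that by auto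
    have disj: "(B \<inter> {..<x}) \<inter> insert x (B \<inter> {x<..}) = {}" by auto
    have "card ((B \<inter> {..<x}) \<union> insert x (B \<inter> {x<..})) = card (B \<inter> {..<x}) + card (insert x (B \<inter> {x<..}))"
      by (rule card_Un_disjoint) (use B(1) disj in auto)
    then have "card B = card (B \<inter> {..<x}) + card (insert x (B \<inter> {x<..}))"
      unfolding eqB .
    also have "card (insert x (B \<inter> {x<..})) = card (B \<inter> {x<..}) + 1"
      using B(1) by simp
    finally show ?thesis using B(3) unfolding j_def by simp
  qed
  have up: "card (B \<inter> {x<..}) \<le> T - Suc x" if "x \<in> B" for x
  proof -
    have "B \<inter> {x<..} \<subseteq> {x<..<T}" using B(2) by auto
    then have "card (B \<inter> {x<..}) \<le> card {x<..<T}" by (intro card_mono) auto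
    then show ?thesis by simp
  qed
  have xT: "x < T" "1 \<le> x" if "x \<in> B" for x using B(2) that by auto
  have dx: "d x \<le> 2*m" "j x \<le> L - 1" "T - x = (2*m+1 - d x) + (L - 1 - j x)"
    "d x + (T - x) = T - j x" "d x \<le> 2*m+1" if "x \<in> B" for x
    using jx[OF that] jL[OF that] up[OF that] xT[OF that] T unfolding d_def by auto
  have \<beta>0: "0 \<le> \<beta> i" for i unfolding \<beta>_def using r Kf by simp
  have GB: "Vf r T B - Vf r T {} \<le> (\<Sum>x\<in>B. (1 - r ^ (T - x)) * (K * (1 - r ^ d x) + real (j x)))"
  proof -
    have "Vf r T B - Vf r T {} \<le> (\<Sum>x\<in>B. (1 - r ^ (T - x)) *
           ((\<Sum>c<x - card (B \<inter> {..<x}). r ^ c) + real (card (B \<inter> {..<x}))))"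
      using G_upper[OF B(1,2)] r by simp
    also have "\<dots> = (\<Sum>x\<in>B. (1 - r ^ (T - x)) * (K * (1 - r ^ d x) + real (j x)))"
      using geo_eq[of r K] r K unfolding d_def j_def by simp
    finally show ?thesis .
  qed
  have termB: "(1 - r ^ (T - x)) * (K * (1 - r ^ d x) + real (j x))
      = (K + real (j x) + K * r ^ (T - j x)) - (K * r ^ d x + (K + real (j x)) * r ^ (T - x))"
    if "x \<in> B" for x
  proof -
    have "r ^ d x * r ^ (T - x) = r ^ (T - j x)" using dx(4)[OF that] by (simp add: power_add[symmetric])
    then show ?thesis by (simp add: algebra_simps)
  qed
  have sumB: "(\<Sum>x\<in>B. (1 - r ^ (T - x)) * (K * (1 - r ^ d x) + real (j x)))
      = (\<Sum>i<L. K + real i + K * r ^ (T - i)) - (\<Sum>x\<in>B. K * r ^ d x + (K + real (j x)) * r ^ (T - x))"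
  proof -
    have "(\<Sum>x\<in>B. (1 - r ^ (T - x)) * (K * (1 - r ^ d x) + real (j x)))
        = (\<Sum>x\<in>B. (K + real (j x) + K * r ^ (T - j x)) - (K * r ^ d x + (K + real (j x)) * r ^ (T - x)))"
      using termB by (intro sum.cong) auto
    also have "\<dots> = (\<Sum>x\<in>B. K + real (j x) + K * r ^ (T - j x)) - (\<Sum>x\<in>B. K * r ^ d x + (K + real (j x)) * r ^ (T - x))"
      by (simp only: sum_subtractf)
    also have "(\<Sum>x\<in>B. K + real (j x) + K * r ^ (T - j x)) = (\<Sum>i<L. K + real i + K * r ^ (T - i))"
      using sum_rank[OF B(1), of "\<lambda>i. K + real i + K * r ^ (T - i)"] B(3) unfolding j_def by simp
    finally show ?thesis .
  qed
  have star: "Vf r T {Suc m..m+L} - Vf r T {}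
      = (\<Sum>i<L. K + real i + K * r ^ (T - i)) - (\<Sum>i<L. K * r ^ Suc m + (K + real i) * r ^ (m+L-1-i))"
  proof -
    have "Vf r T {Suc m..m+L} - Vf r T {} = (\<Sum>i<L. (1 - r ^ (m+L-1-i)) * (K * (1 - r ^ Suc m) + real i))"
      by (rule star_exact[OF r K T m1])
    also have "\<dots> = (\<Sum>i<L. (K + real i + K * r ^ (T - i)) - (K * r ^ Suc m + (K + real i) * r ^ (m+L-1-i)))"
    proof (rule sum.cong[OF refl])
      fix i assume "i \<in> {..<L}"
      then have "Suc m + (m+L-1-i) = T - i" using T by auto
      then have "r ^ Suc m * r ^ (m+L-1-i) = r ^ (T - i)" by (simp only: power_add[symmetric])
      then show "(1 - r ^ (m+L-1-i)) * (K * (1 - r ^ Suc m) + real i)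
          = (K + real i + K * r ^ (T - i)) - (K * r ^ Suc m + (K + real i) * r ^ (m+L-1-i))"
        by (simp add: algebra_simps)
    qed
    also have "\<dots> = (\<Sum>i<L. K + real i + K * r ^ (T - i)) - (\<Sum>i<L. K * r ^ Suc m + (K + real i) * r ^ (m+L-1-i))"
      by (simp only: sum_subtractf)
    finally show ?thesis .
  qed
  have bsum: "(\<Sum>i<L. \<beta> i) = K * real L" unfolding \<beta>_def by (rule beta_sum[OF Kf(2)])
  have lhs: "(\<Sum>i<L. K * r ^ Suc m + (K + real i) * r ^ (m+L-1-i)) = K * real L * r ^ Suc m + r ^ m * (K * real L)"
  proof -
    have "(\<Sum>i<L. K * r ^ Suc m + (K + real i) * r ^ (m+L-1-i)) = (\<Sum>i<L. K * r ^ Suc m + r ^ m * \<beta> i)"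
    proof (rule sum.cong[OF refl])
      fix i assume "i \<in> {..<L}"
      then have "m + (L - 1 - i) = m+L-1-i" by auto
      then have "r ^ (m+L-1-i) = r ^ m * r ^ (L - 1 - i)" by (simp only: power_add[symmetric])
      then show "K * r ^ Suc m + (K + real i) * r ^ (m+L-1-i) = K * r ^ Suc m + r ^ m * \<beta> i"
        unfolding \<beta>_def by (simp add: algebra_simps)
    qed
    also have "\<dots> = K * real L * r ^ Suc m + r ^ m * (K * real L)"
      by (simp add: sum.distrib sum_distrib_left[symmetric] bsum)
    finally show ?thesis .
  qed
  have pt: "K * r ^ d x + (K + real (j x)) * r ^ (T - x) \<ge> (K - \<beta> (j x)) * r ^ d x + (r ^ m + r ^ Suc m) * \<beta> (j x)"
    if "x \<in> B" for x
  proof -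
    have "r ^ (T - x) = r ^ (2*m+1 - d x) * r ^ (L - 1 - j x)"
      using dx(3)[OF that] by (simp add: power_add)
    then have e: "(K + real (j x)) * r ^ (T - x) = \<beta> (j x) * r ^ (2*m+1 - d x)"
      unfolding \<beta>_def by simp
    have "r ^ m + r ^ Suc m - r ^ d x \<le> r ^ (2*m+1 - d x)"
      using tangent[of r "d x" m] r dx(5)[OF that] by simp
    then have "\<beta> (j x) * (r ^ m + r ^ Suc m - r ^ d x) \<le> \<beta> (j x) * r ^ (2*m+1 - d x)"
      using \<beta>0 by (intro mult_left_mono) auto
    then show ?thesis unfolding e by (simp add: algebra_simps)
  qed
  have mono: "\<beta> (j x) \<le> \<beta> (j y) \<and> r ^ d y \<le> r ^ d x" if "x \<in> B" "y \<in> B" "x < y" for x y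
  proof
    have jxy: "j x < j y" unfolding j_def using rank_mono[OF B(1) that] .
    show "\<beta> (j x) \<le> \<beta> (j y)" unfolding \<beta>_def
      using beta_mono[of r K "j x" "j y" L] r Kf jxy dx(2)[OF that(2)] by simp
    have "B \<inter> {..<y} \<subseteq> (B \<inter> {..<x}) \<union> {x..<y}" by auto
    then have "j y \<le> card ((B \<inter> {..<x}) \<union> {x..<y})" unfolding j_def
      using B(1) by (intro card_mono) auto
    also have "\<dots> \<le> j x + card {x..<y}" unfolding j_def by (rule card_Un_le)
    finally have "j y \<le> j x + (y - x)" by simp
    then have "d x \<le> d y" unfolding d_def using jx[OF that(1)] that(3) by auto
    then show "r ^ d y \<le> r ^ d x" using r by (intro power_decreasing) auto
  qed
  have cheb_ok: "0 \<le> (\<Sum>x\<in>B. (K - \<beta> (j x)) * r ^ d x)"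
  proof (rule cheb[OF B(1)])
    fix x y assume xy: "x \<in> B" "y \<in> B"
    consider "x < y" | "x = y" | "y < x" by linarith
    then show "0 \<le> ((K - \<beta> (j x)) - (K - \<beta> (j y))) * (r ^ d x - r ^ d y)"
    proof cases
      case 1 then show ?thesis using mono[OF xy 1] by (intro mult_nonneg_nonneg) auto
    next
      case 2 then show ?thesis by simp
    next
      case 3 then show ?thesis using mono[OF xy(2,1) 3] by (intro mult_nonpos_nonpos) auto
    qed
  next
    have "(\<Sum>x\<in>B. \<beta> (j x)) = (\<Sum>i<L. \<beta> i)"
      using sum_rank[OF B(1), of \<beta>] B(3) unfolding j_def by simp
    then show "(\<Sum>x\<in>B. K - \<beta> (j x)) = 0" using bsum B(3) by (simp add: sum_subtractf)
  qed
  have key: "(\<Sum>i<L. K * r ^ Suc m + (K + real i) * r ^ (m+L-1-i))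
      \<le> (\<Sum>x\<in>B. K * r ^ d x + (K + real (j x)) * r ^ (T - x))"
  proof -
    have "(\<Sum>x\<in>B. (K - \<beta> (j x)) * r ^ d x + (r ^ m + r ^ Suc m) * \<beta> (j x))
        \<le> (\<Sum>x\<in>B. K * r ^ d x + (K + real (j x)) * r ^ (T - x))"
      using pt by (intro sum_mono) auto
    moreover have "(\<Sum>x\<in>B. (K - \<beta> (j x)) * r ^ d x + (r ^ m + r ^ Suc m) * \<beta> (j x))
        = (\<Sum>x\<in>B. (K - \<beta> (j x)) * r ^ d x) + (r ^ m + r ^ Suc m) * (K * real L)"
    proof -
      have "(\<Sum>x\<in>B. \<beta> (j x)) = (\<Sum>i<L. \<beta> i)"
        using sum_rank[OF B(1), of \<beta>] B(3) unfolding j_def by simp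
      then show ?thesis by (simp add: sum.distrib sum_distrib_left[symmetric] bsum)
    qed
    ultimately show ?thesis using lhs cheb_ok by (simp add: algebra_simps)
  qed
  show ?thesis using GB sumB star key by linarith
qed

lemma star_tail:
  fixes r K :: real
  assumes "K * (1 - r) = 1"
  shows "(\<Sum>i<L. (K + real i) * r ^ (m+L-1-i)) = r ^ m * (K * real L)"
proof -
  have "(\<Sum>i<L. (K + real i) * r ^ (m+L-1-i)) = (\<Sum>i<L. r ^ m * ((K + real i) * r ^ (L-1-i)))"
  proof (rule sum.cong[OF refl])
    fix i assume "i \<in> {..<L}"
    then have "m + (L - 1 - i) = m+L-1-i" by auto
    then have "r ^ (m+L-1-i) = r ^ m * r ^ (L - 1 - i)" by (simp only: power_add[symmetric])
    then show "(K + real i) * r ^ (m+L-1-i) = r ^ m * ((K + real i) * r ^ (L-1-i))" by simp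
  qed
  also have "\<dots> = r ^ m * (\<Sum>i<L. (K + real i) * r ^ (L-1-i))" by (rule sum_distrib_left[symmetric])
  also have "\<dots> = r ^ m * (K * real L)" by (simp only: beta_sum[OF assms])
  finally show ?thesis .
qed

lemma star_lower:
  fixes r K :: real
  assumes r: "0 \<le> r" "r < 1" and K: "K = 1 / (1 - r)" and T: "T = 2*m + L" and m1: "1 \<le> m"
  shows "Vf r T {Suc m..m+L} - Vf r T {} \<ge> K * real L + real L * (real L - 1) / 2 - 2 * K * real L * r ^ m"
proof -
  have Kf: "K \<ge> 1" "K * (1 - r) = 1" using K_facts[OF r K] by auto
  have "(\<Sum>i<L. K + real i - K * r ^ Suc m - (K + real i) * r ^ (m+L-1-i))
      \<le> (\<Sum>i<L. (1 - r ^ (m+L-1-i)) * (K * (1 - r ^ Suc m) + real i))"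
  proof (rule sum_mono)
    fix i assume "i \<in> {..<L}"
    have "0 \<le> r ^ (m+L-1-i) * (K * r ^ Suc m)" using r Kf by simp
    then show "K + real i - K * r ^ Suc m - (K + real i) * r ^ (m+L-1-i)
      \<le> (1 - r ^ (m+L-1-i)) * (K * (1 - r ^ Suc m) + real i)"
      by (simp add: algebra_simps)
  qed
  also have "\<dots> = Vf r T {Suc m..m+L} - Vf r T {}" by (rule star_exact[OF r K T m1, symmetric])
  finally have a: "(\<Sum>i<L. K + real i - K * r ^ Suc m - (K + real i) * r ^ (m+L-1-i)) \<le> Vf r T {Suc m..m+L} - Vf r T {}" .
  have b: "(\<Sum>i<L. K + real i - K * r ^ Suc m - (K + real i) * r ^ (m+L-1-i))
      = K * real L + real L * (real L - 1) / 2 - K * real L * r ^ Suc m - r ^ m * (K * real L)"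
  proof -
    have t: "(\<Sum>i<L. (K + real i) * r ^ (m+L-1-i)) = r ^ m * (K * real L)" by (rule star_tail[OF Kf(2)])
    have "(\<Sum>i<L. K + real i - K * r ^ Suc m - (K + real i) * r ^ (m+L-1-i))
       = (\<Sum>i<L. K + real i) - (\<Sum>i<L. K * r ^ Suc m) - (\<Sum>i<L. (K + real i) * r ^ (m+L-1-i))"
      by (simp only: sum_subtractf)
    also have "\<dots> = (\<Sum>i<L. K + real i) - (\<Sum>i<L. K * r ^ Suc m) - r ^ m * (K * real L)"
      by (simp only: t)
    finally show ?thesis by (simp add: sum.distrib sum_nat_real)
  qed
  have c: "K * real L * r ^ Suc m \<le> K * real L * r ^ m"
    using r Kf by (intro mult_left_mono power_decreasing) auto
  show ?thesis using a b c by (simp add: algebra_simps)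
qed

lemma multi:
  fixes r K :: real and Bs :: "nat \<Rightarrow> nat set"
  assumes r: "0 \<le> r" "r < 1" and K: "K = 1 / (1 - r)" and T: "T = 2*m + L" and m1: "1 \<le> m"
    and L1: "1 \<le> L" and small: "4 * K * r ^ m \<le> 1"
    and Bs: "\<And>i. i < N \<Longrightarrow> finite (Bs i) \<and> Bs i \<subseteq> {1..<T}"
    and tot: "(\<Sum>i<N. card (Bs i)) \<le> L" and j0: "j0 < N"
  shows "(\<Sum>i<N. Vf r T (Bs i)) \<le> (\<Sum>i<N. Vf r T (if i = j0 then {Suc m..m+L} else {}))"
proof -
  let ?V0 = "Vf r T {}" and ?Gs = "Vf r T {Suc m..m+L} - Vf r T {}"
  have Kf: "K \<ge> 1" "K * (1 - r) = 1" using K_facts[OF r K] by auto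
  have rhs: "(\<Sum>i<N. Vf r T (if i = j0 then {Suc m..m+L} else {})) = (\<Sum>i<N. ?V0) + ?Gs"
  proof -
    have "(\<Sum>i<N. Vf r T (if i = j0 then {Suc m..m+L} else {})) = (\<Sum>i<N. ?V0 + (if i = j0 then ?Gs else 0))"
      by (intro sum.cong) auto
    also have "\<dots> = (\<Sum>i<N. ?V0) + ?Gs" using j0 by (simp add: sum.distrib)
    finally show ?thesis .
  qed
  have lhs: "(\<Sum>i<N. Vf r T (Bs i)) = (\<Sum>i<N. ?V0) + (\<Sum>i<N. Vf r T (Bs i) - ?V0)"
    by (simp add: sum_subtractf)
  have goal: "(\<Sum>i<N. Vf r T (Bs i) - ?V0) \<le> ?Gs"
  proof (cases "\<exists>i0<N. card (Bs i0) = L")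
    case True
    then obtain i0 where i0: "i0 < N" "card (Bs i0) = L" by auto
    have "card (Bs i0) + (\<Sum>i\<in>{..<N} - {i0}. card (Bs i)) \<le> L"
      using tot i0 by (simp add: sum.remove)
    then have "(\<Sum>i\<in>{..<N} - {i0}. card (Bs i)) = 0" using i0 by simp
    then have z: "card (Bs i) = 0" if "i \<in> {..<N} - {i0}" for i using that by simp
    have "(\<Sum>i<N. Vf r T (Bs i) - ?V0) = (Vf r T (Bs i0) - ?V0) + (\<Sum>i\<in>{..<N} - {i0}. Vf r T (Bs i) - ?V0)"
      using i0 by (simp add: sum.remove)
    also have "(\<Sum>i\<in>{..<N} - {i0}. Vf r T (Bs i) - ?V0) = 0"
    proof (rule sum.neutral, rule ballI)
      fix i assume i: "i \<in> {..<N} - {i0}"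
      then have "Bs i = {}" using z[OF i] Bs[of i] by auto
      then show "Vf r T (Bs i) - ?V0 = 0" by simp
    qed
    also have "Vf r T (Bs i0) - ?V0 \<le> ?Gs"
      using fine[OF r K T m1, of "Bs i0"] Bs[OF i0(1)] i0(2) by auto
    finally show ?thesis by simp
  next
    case False
    let ?c = "K + (real L - 2) / 2"
    have rL: "real L \<ge> 1" using L1 by simp
    have h1: "0 \<le> 2*K + real L - 2" using Kf(1) rL by linarith
    have h2: "?c = (2*K + real L - 2) / 2" by (simp add: field_simps)
    have c0: "0 \<le> ?c" unfolding h2 using h1 by simp
    have each: "Vf r T (Bs i) - ?V0 \<le> real (card (Bs i)) * ?c" if i: "i < N" for i
    proof -
      have "card (Bs i) \<le> L" using tot member_le_sum[of i "{..<N}" "\<lambda>i. card (Bs i)"] i by auto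
      then have lt: "card (Bs i) \<le> L - 1" using False i by fastforce
      have g1: "Vf r T (Bs i) - ?V0 \<le> K * real (card (Bs i)) + real (card (Bs i)) * (real (card (Bs i)) - 1) / 2"
        using crude[OF r K] Bs[OF i] by auto
      have "real (card (Bs i)) * (real (card (Bs i)) - 1) \<le> real (card (Bs i)) * (real L - 2)"
        using lt L1 by (intro mult_left_mono) auto
      then have "real (card (Bs i)) * (real (card (Bs i)) - 1) / 2 \<le> real (card (Bs i)) * (real L - 2) / 2"
        by (rule divide_right_mono) simp
      moreover have "real (card (Bs i)) * ?c = K * real (card (Bs i)) + real (card (Bs i)) * (real L - 2) / 2"
        by (simp add: algebra_simps)
      ultimately have "K * real (card (Bs i)) + real (card (Bs i)) * (real (card (Bs i)) - 1) / 2
          \<le> real (card (Bs i)) * ?c" by linarith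
      then show ?thesis using g1 by linarith
    qed
    have "(\<Sum>i<N. Vf r T (Bs i) - ?V0) \<le> (\<Sum>i<N. real (card (Bs i)) * ?c)"
      using each by (intro sum_mono) auto
    also have "\<dots> = real (\<Sum>i<N. card (Bs i)) * ?c" by (simp add: sum_distrib_right)
    also have "\<dots> \<le> real L * ?c"
    proof (rule mult_right_mono)
      show "real (\<Sum>i<N. card (Bs i)) \<le> real L" using tot by (simp only: of_nat_le_iff)
    qed (rule c0)
    also have "\<dots> \<le> ?Gs"
    proof -
      have "2 * K * real L * r ^ m \<le> real L / 2"
        using small L1 by (simp add: algebra_simps)
      moreover have "real L * ?c = K * real L + real L * (real L - 1) / 2 - real L / 2"
        by (simp add: field_simps)
      ultimately show ?thesis using star_lower[OF r K T m1] by linarith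
    qed
    finally show ?thesis .
  qed
  show ?thesis using lhs rhs goal by simp
qed

lemma avg_formula:
  assumes "bs_dist N k p"
  shows "avg_age N k T p \<sigma> = (1 / (real T * real N)) * (\<Sum>i<N. Vf (1 - qm N k p i) T {s. \<sigma> i s = 0})"
proof -
  have "avg_age N k T p \<sigma> = (1 / real T) * (\<Sum>t\<in>{1..T}. (1 / real N) *
      (\<Sum>i<N. \<Sum>y\<in>{1..t}. (1 - qm N k p i) ^ card ({y..<t} - {s. \<sigma> i s = 0})))"
    unfolding avg_age_def
    by (intro arg_cong[where f="\<lambda>z. (1 / real T) * z"] sum.cong refl arg_cong[where f="\<lambda>z. (1 / real N) * z"])
       (simp add: exp_age_formula[OF assms])
  also have "\<dots> = (1 / (real T * real N)) * (\<Sum>i<N. \<Sum>t\<in>{1..T}. \<Sum>y\<in>{1..t}. (1 - qm N k p i) ^ card ({y..<t} - {s. \<sigma> i s = 0}))"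
  proof -
    let ?F = "\<lambda>i t. \<Sum>y\<in>{1..t}. (1 - qm N k p i) ^ card ({y..<t} - {s. \<sigma> i s = 0})"
    have "(\<Sum>t\<in>{1..T}. (1 / real N) * (\<Sum>i<N. ?F i t)) = (1 / real N) * (\<Sum>t\<in>{1..T}. \<Sum>i<N. ?F i t)"
      by (simp only: sum_distrib_left[symmetric])
    also have "(\<Sum>t\<in>{1..T}. \<Sum>i<N. ?F i t) = (\<Sum>i<N. \<Sum>t\<in>{1..T}. ?F i t)"
      by (rule sum.swap)
    finally show ?thesis by simp
  qed
  finally show ?thesis unfolding Vf_def .
qed

lemma Vf_restrict: "Vf r T Z = Vf r T (Z \<inter> {1..<T})"
  unfolding Vf_def
proof (intro sum.cong refl)
  fix t y assume "t \<in> {1..T}" "y \<in> {1..t}"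
  then have "{y..<t} - Z = {y..<t} - (Z \<inter> {1..<T})" by auto
  then show "r ^ card ({y..<t} - Z) = r ^ card ({y..<t} - (Z \<inter> {1..<T}))" by simp
qed

lemma tangent_pow:
  fixes x y :: real
  assumes "0 \<le> x" "0 \<le> y"
  shows "y ^ n + real n * y ^ (n - 1) * (x - y) \<le> x ^ n"
proof (cases n)
  case 0 then show ?thesis by simp
next
  case (Suc n')
  show ?thesis
  proof (cases "y = 0")
    case True
    then show ?thesis using Suc assms by (cases n') auto
  next
    case False
    then have y: "0 < y" using assms by simp
    define h where "h = (x - y) / y"
    have h: "-1 \<le> h" unfolding h_def using y assms by (simp add: field_simps)
    have xe: "x = y * (1 + h)" unfolding h_def using y by (simp add: field_simps)
    have "y ^ n * (1 + real n * h) \<le> y ^ n * (1 + h) ^ n"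
      using Bernoulli_inequality[OF h, of n] y by (intro mult_left_mono) auto
    also have "\<dots> = x ^ n" unfolding xe by (simp add: power_mult_distrib)
    also have "y ^ n * (1 + real n * h) = y ^ n + real n * y ^ (n - 1) * (x - y)"
      unfolding h_def using y Suc by (simp add: field_simps)
    finally show ?thesis by simp
  qed
qed

lemma jensen_pow:
  fixes x :: "nat \<Rightarrow> real" and y :: real
  assumes "\<And>i. i < N \<Longrightarrow> 0 \<le> x i" "0 \<le> y" "(\<Sum>i<N. x i) = real N * y"
  shows "real N * y ^ n \<le> (\<Sum>i<N. x i ^ n)"
proof -
  have "(\<Sum>i<N. y ^ n + real n * y ^ (n - 1) * (x i - y)) \<le> (\<Sum>i<N. x i ^ n)"
    using assms tangent_pow by (intro sum_mono) auto
  also have "(\<Sum>i<N. y ^ n + real n * y ^ (n - 1) * (x i - y))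
      = real N * y ^ n + real n * y ^ (n - 1) * ((\<Sum>i<N. x i) - real N * y)"
    by (simp only: sum.distrib sum_constant sum_distrib_left[symmetric] sum_subtractf card_lessThan)
  finally show ?thesis using assms(3) by simp
qed

lemma jensen_Vf:
  fixes x :: "nat \<Rightarrow> real" and y :: real
  assumes "\<And>i. i < N \<Longrightarrow> 0 \<le> x i" "0 \<le> y" "(\<Sum>i<N. x i) = real N * y"
  shows "real N * Vf y T Z \<le> (\<Sum>i<N. Vf (x i) T Z)"
proof -
  have "real N * Vf y T Z = (\<Sum>t\<in>{1..T}. \<Sum>yy\<in>{1..t}. real N * y ^ card ({yy..<t} - Z))"
    unfolding Vf_def by (simp add: sum_distrib_left)
  also have "\<dots> \<le> (\<Sum>t\<in>{1..T}. \<Sum>yy\<in>{1..t}. \<Sum>i<N. x i ^ card ({yy..<t} - Z))"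
    using jensen_pow[OF assms] by (intro sum_mono) auto
  also have "\<dots> = (\<Sum>i<N. Vf (x i) T Z)"
    unfolding Vf_def by (simp add: sum.swap[of _ "{..<N}"] sum.swap[of _ "{1..T}"])
  finally show ?thesis .
qed

lemma marg_sum:
  assumes "bs_dist N k p"
  shows "(\<Sum>i<N. qm N k p i) = real k"
proof -
  have "(\<Sum>i<N. qm N k p i) = (\<Sum>i<N. \<Sum>S\<in>ksets N k. if i \<in> S then p S else 0)"
    unfolding qm_def using finite_ksets by (simp add: sum.inter_filter)
  also have "\<dots> = (\<Sum>S\<in>ksets N k. \<Sum>i<N. if i \<in> S then p S else 0)" by (rule sum.swap)
  also have "\<dots> = (\<Sum>S\<in>ksets N k. real k * p S)"
  proof (rule sum.cong[OF refl])
    fix S assume S: "S \<in> ksets N k"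
    have "(\<Sum>i<N. if i \<in> S then p S else 0) = (\<Sum>i\<in>{i\<in>{..<N}. i \<in> S}. p S)"
      by (rule sum.inter_filter[symmetric]) simp
    also have "{i\<in>{..<N}. i \<in> S} = S" using S unfolding ksets_def by auto
    finally show "(\<Sum>i<N. if i \<in> S then p S else 0) = real k * p S"
      using S unfolding ksets_def by simp
  qed
  also have "\<dots> = real k" using assms unfolding bs_dist_def by (simp add: sum_distrib_left[symmetric])
  finally show ?thesis .
qed

lemma marg_bounds:
  assumes "bs_dist N k p"
  shows "0 \<le> qm N k p i" "qm N k p i \<le> 1"
proof -
  show "0 \<le> qm N k p i" using assms unfolding qm_def bs_dist_def by (intro sum_nonneg) auto
  have "qm N k p i \<le> (\<Sum>S\<in>ksets N k. p S)"
    unfolding qm_def using assms finite_ksets unfolding bs_dist_def by (intro sum_mono2) auto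
  then show "qm N k p i \<le> 1" using assms unfolding bs_dist_def by simp
qed

definition blk :: "nat \<Rightarrow> nat \<Rightarrow> nat \<Rightarrow> nat \<Rightarrow> nat \<Rightarrow> nat" where
  "blk m L j = (\<lambda>i t. if i = j \<and> Suc m \<le> t \<and> t \<le> m + L then 0 else 1)"

lemma blk_zero: "{s. blk m L j i s = 0} = (if i = j then {Suc m..m+L} else {})"
  unfolding blk_def by auto

lemma sum_delta_real:
  fixes A C :: real
  assumes "j < N"
  shows "(\<Sum>i<N. if i = j then A else C) = A + (real N - 1) * C"
proof -
  have "(\<Sum>i<N. if i = j then A else C) = (\<Sum>i<N. C + (if i = j then A - C else 0))"
    by (intro sum.cong) auto
  also have "\<dots> = real N * C + (A - C)" using assms by (simp add: sum.distrib)
  finally show ?thesis by (simp add: algebra_simps)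
qed

lemma blk_feasible:
  assumes T: "T = 2*m + L" and aL: "real L \<le> \<alpha> * real T" and ka: "1 \<le> ka" and j: "j < N"
  shows "feasible N T ka \<alpha> (blk m L j)"
  unfolding feasible_def
proof (intro conjI ballI allI impI)
  fix i t assume "i < N" "t \<in> {1..T}"
  show "blk m L j i t \<in> {0, 1}" unfolding blk_def by auto
next
  have inner: "(\<Sum>t = 1..T. 1 - blk m L j i t) = (if i = j then L else 0)" for i
  proof (cases "i = j")
    case True
    have "(\<Sum>t = 1..T. 1 - blk m L j i t) = (\<Sum>t\<in>{1..T}. if t \<in> {Suc m..m+L} then 1 else 0)"
      unfolding blk_def using True by (intro sum.cong) auto
    also have "\<dots> = (\<Sum>t\<in>{t\<in>{1..T}. t \<in> {Suc m..m+L}}. 1)"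
      by (rule sum.inter_filter[symmetric]) simp
    also have "{t\<in>{1..T}. t \<in> {Suc m..m+L}} = {Suc m..m+L}" using T by auto
    finally show ?thesis using True by simp
  next
    case False
    then show ?thesis unfolding blk_def by simp
  qed
  have "(\<Sum>i<N. \<Sum>t = 1..T. 1 - blk m L j i t) = L"
    unfolding inner using j by simp
  then show "real (\<Sum>i<N. \<Sum>t = 1..T. 1 - blk m L j i t) \<le> \<alpha> * real T" using aL by simp
next
  fix t assume "t \<in> {1..T}"
  have "(\<Sum>i<N. 1 - blk m L j i t) = (\<Sum>i<N. if i = j then (if Suc m \<le> t \<and> t \<le> m + L then 1 else 0) else 0)"
    unfolding blk_def by (intro sum.cong) auto
  also have "\<dots> \<le> 1" using j by simp
  finally show "(\<Sum>i<N. 1 - blk m L j i t) \<le> ka" using ka by simp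
qed

lemma avg_blk:
  assumes "bs_dist N k p"
  shows "avg_age N k T p (blk m L j) = (1 / (real T * real N)) *
     (\<Sum>i<N. Vf (1 - qm N k p i) T (if i = j then {Suc m..m+L} else {}))"
  unfolding avg_formula[OF assms] blk_zero ..

lemma r_bounds:
  assumes "1 \<le> k" "k \<le> N"
  shows "0 \<le> 1 - real k / real N" "1 - real k / real N < 1"
proof -
  have N: "0 < real N" using assms by simp
  have "real k / real N \<le> 1" using assms N by (simp add: divide_le_eq_1)
  moreover have "0 < real k / real N" using assms N by simp
  ultimately show "0 \<le> 1 - real k / real N" "1 - real k / real N < 1" by linarith+
qed

lemma part1:
  fixes r K :: real
  assumes r: "r = 1 - real k / real N" and K: "K = 1 / (1 - r)"
    and kN: "1 \<le> k" "k \<le> N"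
    and T: "T = 2*m + L" and m1: "1 \<le> m" and L1: "1 \<le> L" and small: "4 * K * r ^ m \<le> 1"
    and aL: "\<alpha> * real T = real L"
    and p: "bs_dist N k p" and marg: "\<forall>i<N. qm N k p i = real k / real N" and j: "j < N"
    and feas: "feasible N T ka \<alpha> \<sigma>"
  shows "avg_age N k T p \<sigma> \<le> avg_age N k T p (blk m L j)"
proof -
  have r0: "0 \<le> r" "r < 1" using r_bounds[OF kN] r by auto
  define Bs where "Bs i = {s. \<sigma> i s = 0} \<inter> {1..<T}" for i
  have e1: "avg_age N k T p \<sigma> = (1 / (real T * real N)) * (\<Sum>i<N. Vf r T (Bs i))"
  proof -
    have "(\<Sum>i<N. Vf (1 - qm N k p i) T {s. \<sigma> i s = 0}) = (\<Sum>i<N. Vf r T (Bs i))"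
    proof (rule sum.cong[OF refl])
      fix i assume "i \<in> {..<N}"
      then have q: "1 - qm N k p i = r" using marg r by simp
      show "Vf (1 - qm N k p i) T {s. \<sigma> i s = 0} = Vf r T (Bs i)"
        unfolding q Bs_def by (rule Vf_restrict)
    qed
    then show ?thesis unfolding avg_formula[OF p] by simp
  qed
  have e2: "avg_age N k T p (blk m L j) = (1 / (real T * real N)) *
     (\<Sum>i<N. Vf r T (if i = j then {Suc m..m+L} else {}))"
    unfolding avg_blk[OF p] using marg r by simp
  have cardB: "card (Bs i) \<le> (\<Sum>t = 1..T. 1 - \<sigma> i t)" for i
  proof -
    have "card (Bs i) = (\<Sum>t\<in>Bs i. 1 - \<sigma> i t)" unfolding Bs_def by simp
    also have "\<dots> \<le> (\<Sum>t = 1..T. 1 - \<sigma> i t)" unfolding Bs_def by (intro sum_mono2) auto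
    finally show ?thesis .
  qed
  have tot: "(\<Sum>i<N. card (Bs i)) \<le> L"
  proof -
    have "(\<Sum>i<N. card (Bs i)) \<le> (\<Sum>i<N. \<Sum>t = 1..T. 1 - \<sigma> i t)" using cardB by (intro sum_mono) auto
    moreover have "real (\<Sum>i<N. \<Sum>t = 1..T. 1 - \<sigma> i t) \<le> real L" using feas aL unfolding feasible_def by simp
    ultimately show ?thesis by linarith
  qed
  have "(\<Sum>i<N. Vf r T (Bs i)) \<le> (\<Sum>i<N. Vf r T (if i = j then {Suc m..m+L} else {}))"
    by (rule multi[OF r0 K T m1 L1 small _ tot j]) (auto simp: Bs_def)
  then show ?thesis unfolding e1 e2 by (intro mult_left_mono) auto
qed

lemma part2:
  fixes r :: real
  assumes r: "r = 1 - real k / real N" and kN: "1 \<le> k" "k \<le> N"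
    and p: "bs_dist N k p" and marg: "\<forall>i<N. qm N k p i = real k / real N" and j: "j < N"
    and p': "bs_dist N k p'"
  shows "\<exists>j'<N. avg_age N k T p (blk m L j) \<le> avg_age N k T p' (blk m L j')"
proof -
  let ?B = "{Suc m..m+L}"
  define x where "x i = 1 - qm N k p' i" for i
  have N0: "0 < N" using j by simp
  have r0: "0 \<le> r" using r_bounds[OF kN] r by auto
  have x0: "0 \<le> x i" for i unfolding x_def using marg_bounds[OF p'] by simp
  have xs: "(\<Sum>i<N. x i) = real N * r"
    unfolding x_def r using marg_sum[OF p'] N0 by (simp add: sum_subtractf field_simps)
  define S' where "S' j' = (\<Sum>i<N. Vf (x i) T (if i = j' then ?B else {}))" for j'
  define S where "S = (\<Sum>i<N. Vf r T (if i = j then ?B else {}))"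
  have eS: "S = Vf r T ?B + (real N - 1) * Vf r T {}"
    unfolding S_def using sum_delta_real[OF j, of "Vf r T ?B" "Vf r T {}"]
    by (simp add: if_distrib[of "Vf r T"])
  have eS': "(\<Sum>j'<N. S' j') = (\<Sum>i<N. Vf (x i) T ?B) + (real N - 1) * (\<Sum>i<N. Vf (x i) T {})"
  proof -
    have "(\<Sum>j'<N. S' j') = (\<Sum>i<N. \<Sum>j'<N. Vf (x i) T (if i = j' then ?B else {}))"
      unfolding S'_def by (rule sum.swap)
    also have "\<dots> = (\<Sum>i<N. Vf (x i) T ?B + (real N - 1) * Vf (x i) T {})"
    proof (rule sum.cong[OF refl])
      fix i assume i: "i \<in> {..<N}"
      have "(\<Sum>j'<N. Vf (x i) T (if i = j' then ?B else {})) = (\<Sum>j'<N. if j' = i then Vf (x i) T ?B else Vf (x i) T {})"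
        by (intro sum.cong) auto
      also have "\<dots> = Vf (x i) T ?B + (real N - 1) * Vf (x i) T {}"
        using i by (intro sum_delta_real) auto
      finally show "(\<Sum>j'<N. Vf (x i) T (if i = j' then ?B else {})) = Vf (x i) T ?B + (real N - 1) * Vf (x i) T {}" .
    qed
    also have "\<dots> = (\<Sum>i<N. Vf (x i) T ?B) + (real N - 1) * (\<Sum>i<N. Vf (x i) T {})"
      by (simp add: sum.distrib sum_distrib_left)
    finally show ?thesis .
  qed
  have J1: "real N * Vf r T ?B \<le> (\<Sum>i<N. Vf (x i) T ?B)" by (rule jensen_Vf[OF x0 r0 xs])
  have J2: "real N * Vf r T {} \<le> (\<Sum>i<N. Vf (x i) T {})" by (rule jensen_Vf[OF x0 r0 xs])
  have N1: "0 \<le> real N - 1" using N0 by simp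
  have big: "real N * S \<le> (\<Sum>j'<N. S' j')"
  proof -
    have "real N * S = real N * Vf r T ?B + (real N - 1) * (real N * Vf r T {})"
      unfolding eS by (simp add: algebra_simps)
    also have "\<dots> \<le> (\<Sum>i<N. Vf (x i) T ?B) + (real N - 1) * (\<Sum>i<N. Vf (x i) T {})"
      using J1 J2 N1 by (intro add_mono mult_left_mono) auto
    finally show ?thesis unfolding eS' .
  qed
  have "\<exists>j'<N. S \<le> S' j'"
  proof (rule ccontr)
    assume "\<not> (\<exists>j'<N. S \<le> S' j')"
    then have "\<forall>j'\<in>{..<N}. S' j' < S" by auto
    then have "(\<Sum>j'<N. S' j') < (\<Sum>j'<N. S)" using N0 by (intro sum_strict_mono) auto
    then show False using big by simp
  qed
  then obtain j' where j': "j' < N" "S \<le> S' j'" by auto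
  have "avg_age N k T p (blk m L j) = (1 / (real T * real N)) * S"
    unfolding avg_blk[OF p] S_def using marg r by simp
  also have "\<dots> \<le> (1 / (real T * real N)) * S' j'" using j' by (intro mult_left_mono) auto
  also have "\<dots> = avg_age N k T p' (blk m L j')"
    unfolding avg_blk[OF p'] S'_def x_def ..
  finally show ?thesis using j' by auto
qed

theorem theorem17:
  fixes N k ka :: nat and \<alpha> :: real
  assumes "N \<ge> 2" and "1 \<le> k" and "k \<le> N" and "ka \<ge> 1"
    and "0 < \<alpha>" and "\<alpha> < 1"
  shows "\<exists>T0. \<forall>T \<ge> T0. (\<exists>a::int. \<alpha> * real T = real_of_int a) \<longrightarrow>
            (\<exists>m::nat. (1 - \<alpha>) * real T = 2 * real m) \<longrightarrow>
          (\<forall>p j. bs_dist N k p \<longrightarrow>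
             (\<forall>i<N. (\<Sum>S\<in>{S\<in>ksets N k. i \<in> S}. p S) = real k / real N) \<longrightarrow>
             j < N \<longrightarrow>
             (let \<sigma>s = (\<lambda>i t. if i = j \<and> (1 - \<alpha>) * real T / 2 + 1 \<le> real t
                                     \<and> real t \<le> (1 + \<alpha>) * real T / 2 then 0 else 1)
              in feasible N T ka \<alpha> \<sigma>s \<and>
                 (\<forall>\<sigma>. feasible N T ka \<alpha> \<sigma> \<longrightarrow> avg_age N k T p \<sigma> \<le> avg_age N k T p \<sigma>s) \<and>
                 (\<forall>p'. bs_dist N k p' \<longrightarrow>
                    (\<forall>\<sigma>. feasible N T ka \<alpha> \<sigma> \<longrightarrow>
                       (\<exists>\<sigma>'. feasible N T ka \<alpha> \<sigma>' \<and> avg_age N k T p \<sigma> \<le> avg_age N k T p' \<sigma>')))))"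
proof -
  define r where "r = 1 - real k / real N"
  define K where "K = 1 / (1 - r)"
  have r0: "0 \<le> r" "r < 1" using r_bounds[OF assms(2,3)] unfolding r_def by auto
  have Kf: "K \<ge> 1" "K * (1 - r) = 1" using K_facts[OF r0 K_def] by auto
  obtain M where M: "r ^ M < 1 / (4 * K)"
    using real_arch_pow_inv[of "1 / (4 * K)" r] r0 Kf by auto
  have small: "4 * K * r ^ m' \<le> 1" if "M \<le> m'" for m'
  proof -
    have "r ^ m' \<le> r ^ M" using r0 that by (intro power_decreasing) auto
    then have "r ^ m' < 1 / (4 * K)" using M by simp
    then show ?thesis using Kf by (simp add: field_simps)
  qed
  define T0 where "T0 = nat \<lceil>2 * (real M + 1) / (1 - \<alpha>)\<rceil> + 1"
  show ?thesis
  proof (rule exI[of _ T0], intro allI impI)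
    fix T :: nat and p j
    assume T0: "T0 \<le> T" and ha: "\<exists>a::int. \<alpha> * real T = real_of_int a"
      and hm: "\<exists>m::nat. (1 - \<alpha>) * real T = 2 * real m"
      and p: "bs_dist N k p"
      and marg0: "\<forall>i<N. (\<Sum>S\<in>{S\<in>ksets N k. i \<in> S}. p S) = real k / real N"
      and j: "j < N"
    obtain a :: int where a: "\<alpha> * real T = real_of_int a" using ha by auto
    obtain m :: nat where m: "(1 - \<alpha>) * real T = 2 * real m" using hm by auto
    have al: "0 < 1 - \<alpha>" using assms by simp
    have "2 * (real M + 1) / (1 - \<alpha>) \<le> real (nat \<lceil>2 * (real M + 1) / (1 - \<alpha>)\<rceil>)"
      by linarith
    also have "\<dots> < real T" using T0 unfolding T0_def by linarith
    finally have "2 * (real M + 1) / (1 - \<alpha>) < real T" .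
    then have "2 * (real M + 1) < (1 - \<alpha>) * real T" using al by (simp add: field_simps)
    then have "2 * (real M + 1) < 2 * real m" using m by simp
    then have "real M + 1 < real m" by simp
    then have "real (M + 1) < real m" by simp
    then have mM: "M + 1 \<le> m" by (simp only: of_nat_less_iff)
    have Tpos: "1 \<le> real T" using T0 unfolding T0_def by simp
    have "0 < \<alpha> * real T" using assms(5) Tpos by simp
    then have a1: "1 \<le> a" using a by simp
    define L where "L = nat a"
    have La: "real L = real_of_int a" unfolding L_def using a1 by simp
    have L1: "1 \<le> L" unfolding L_def using a1 by simp
    have m1: "1 \<le> m" using mM by simp
    have "real T = (1 - \<alpha>) * real T + \<alpha> * real T" by (simp add: algebra_simps)
    also have "\<dots> = real (2*m + L)" using m a La by simp
    finally have TL: "T = 2*m + L" by (simp only: of_nat_eq_iff)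
    have aL: "\<alpha> * real T = real L" using a La by simp
    have c1: "(1 - \<alpha>) * real T / 2 + 1 = real (Suc m)" using m by simp
    have c2: "(1 + \<alpha>) * real T / 2 = real (m + L)"
    proof -
      have "(1 + \<alpha>) * real T = (1 - \<alpha>) * real T + 2 * (\<alpha> * real T)" by (simp add: algebra_simps)
      then show ?thesis using m aL by simp
    qed
    have blk_eq: "(\<lambda>i t. if i = j \<and> (1 - \<alpha>) * real T / 2 + 1 \<le> real t
                          \<and> real t \<le> (1 + \<alpha>) * real T / 2 then 0 else 1) = blk m L j" for j
      unfolding c1 c2 blk_def by (simp only: of_nat_le_iff)
      have marg: "\<forall>i<N. qm N k p i = real k / real N" using marg0 unfolding qm_def .
      have feas: "feasible N T ka \<alpha> (blk m L j')" if "j' < N" for j'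
        using blk_feasible[OF TL _ assms(4) that] aL by simp
      have P1: "avg_age N k T p \<sigma> \<le> avg_age N k T p (blk m L j)" if "feasible N T ka \<alpha> \<sigma>" for \<sigma>
        by (rule part1[OF r_def K_def assms(2,3) TL m1 L1 small[of m] aL p marg j that]) (use mM in simp)
      show "let \<sigma>s = (\<lambda>i t. if i = j \<and> (1 - \<alpha>) * real T / 2 + 1 \<le> real t
                                     \<and> real t \<le> (1 + \<alpha>) * real T / 2 then 0 else 1)
              in feasible N T ka \<alpha> \<sigma>s \<and>
                 (\<forall>\<sigma>. feasible N T ka \<alpha> \<sigma> \<longrightarrow> avg_age N k T p \<sigma> \<le> avg_age N k T p \<sigma>s) \<and>
                 (\<forall>p'. bs_dist N k p' \<longrightarrow>
                    (\<forall>\<sigma>. feasible N T ka \<alpha> \<sigma> \<longrightarrow>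
                       (\<exists>\<sigma>'. feasible N T ka \<alpha> \<sigma>' \<and> avg_age N k T p \<sigma> \<le> avg_age N k T p' \<sigma>')))"
        unfolding Let_def blk_eq
      proof (intro conjI allI impI)
        show "feasible N T ka \<alpha> (blk m L j)" using feas j .
      next
        fix \<sigma> assume "feasible N T ka \<alpha> \<sigma>"
        then show "avg_age N k T p \<sigma> \<le> avg_age N k T p (blk m L j)" by (rule P1)
      next
        fix p' \<sigma> assume p': "bs_dist N k p'" and fs: "feasible N T ka \<alpha> \<sigma>"
        obtain j' where j': "j' < N" "avg_age N k T p (blk m L j) \<le> avg_age N k T p' (blk m L j')"
          using part2[OF r_def assms(2,3) p marg j p', where T=T and m=m and L=L] by auto
        show "\<exists>\<sigma>'. feasible N T ka \<alpha> \<sigma>' \<and> avg_age N k T p \<sigma> \<le> avg_age N k T p' \<sigma>'"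
          using feas[OF j'(1)] j'(2) P1[OF fs] by (intro exI[of _ "blk m L j'"]) auto
      qed
  qed
qed

end
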